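(* Let $(m_i,e_i)\in M\times\mathbb{Z}$, $i=1,\dots,r$, with $m_1,\dots,m_r$ nonzero and generating the lattice $M$. Let $\omega=\operatorname{Cone}(m_1,\dots,m_r)$ and $\Delta=\{v\in N_{\mathbb{Q}}:\langle m_i,v\rangle\ge-e_i,\ i=1,\dots,r\}$. Let $L=\mathbb{Q}_{\ge0}m\subset\omega$ be a ray with primitive lattice vector $m$. Let $p:\mathbb{Q}^r\to M_{\mathbb{Q}}$ be the linear map sending the $i$-th standard basis vector to $m_i$, let $\mathscr{H}_L$ be the Hilbert basis (in $\mathbb{Z}^r$) of the cone $p^{-1}(L)\cap\mathbb{Q}_{\ge0}^r$, and $\mathscr{H}_L^*=\{s\in\mathscr{H}_L: \sum_is_im_i\ne0\}$; for $s\in\mathscr{H}_L^*$ let $\lambda(s)\in\mathbb{Z}_{>0}$ be defined by $\sum_is_im_i=\lambda(s)m$. Then $\min_{v\in\Delta}\langle m,v\rangle=-\min_{s\in\mathscr{H}_L^*}\frac{\sum_{i=1}^rs_ie_i}{\lambda(s)}$.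
   Context: $M,N$ are dual lattices of finite rank with associated $\mathbb{Q}$-vector spaces $M_{\mathbb{Q}},N_{\mathbb{Q}}$. The Hilbert basis of a strongly convex rational polyhedral cone is the unique minimal generating set of the monoid of its lattice points. *)

theory Defs
  imports "HOL-Analysis.Finite_Cartesian_Product"
begin

text \<open>The lattice M is modelled as int^'n, M_Q as rat^'n, N_Q as rat^'n with the
standard pairing.  The index set {1..r} is a finite type 'r.\<close>

definition rvec :: "int^'n \<Rightarrow> rat^'n" where
  "rvec x = (\<chi> i. of_int (x $ i))"

definition pairing :: "int^'n::finite \<Rightarrow> rat^'n \<Rightarrow> rat" where
  "pairing m v = (\<Sum>i\<in>UNIV. of_int (m $ i) * v $ i)"

definition lattice_points :: "(rat^'n) set \<Rightarrow> (int^'n) set" where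
  "lattice_points C = {x. rvec x \<in> C}"

definition monoid_span :: "(int^'n) set \<Rightarrow> (int^'n) set" where
  "monoid_span H = {x. \<exists>F c. finite F \<and> F \<subseteq> H \<and>
      x = (\<Sum>h\<in>F. (int (c h)) *s h)}"

definition hilbert_basis :: "(rat^'n) set \<Rightarrow> (int^'n) set" where
  "hilbert_basis C = (THE H. H \<subseteq> lattice_points C \<and> monoid_span H = lattice_points C \<and>
      (\<forall>H'. H' \<subset> H \<longrightarrow> monoid_span H' \<noteq> lattice_points C))"

definition pmap :: "('r::finite \<Rightarrow> int^'n) \<Rightarrow> rat^'r \<Rightarrow> rat^'n" where
  "pmap ms s = (\<Sum>i\<in>UNIV. (s $ i) *s rvec (ms i))"

definition cone_gen :: "('r::finite \<Rightarrow> int^'n) \<Rightarrow> (rat^'n) set" where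
  "cone_gen ms = {(\<Sum>i\<in>UNIV. a i *s rvec (ms i)) | a. \<forall>i. a i \<ge> 0}"

definition ray :: "int^'n \<Rightarrow> (rat^'n) set" where
  "ray m = {q *s rvec m | q. q \<ge> 0}"

definition Delta :: "('r::finite \<Rightarrow> int^'n::finite) \<Rightarrow> ('r \<Rightarrow> int) \<Rightarrow> (rat^'n) set" where
  "Delta ms e = {v. \<forall>i. pairing (ms i) v \<ge> - of_int (e i)}"

definition fiber_cone :: "('r::finite \<Rightarrow> int^'n) \<Rightarrow> int^'n \<Rightarrow> (rat^'r) set" where
  "fiber_cone ms m = {s. (\<forall>i. s $ i \<ge> 0) \<and> pmap ms s \<in> ray m}"

definition H_star :: "('r::finite \<Rightarrow> int^'n) \<Rightarrow> int^'n \<Rightarrow> (int^'r) set" where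
  "H_star ms m = {s \<in> hilbert_basis (fiber_cone ms m). pmap ms (rvec s) \<noteq> 0}"

definition lam :: "('r::finite \<Rightarrow> int^'n) \<Rightarrow> int^'n \<Rightarrow> int^'r \<Rightarrow> int" where
  "lam ms m s = (THE k. k > 0 \<and> pmap ms (rvec s) = of_int k *s rvec m)"

definition primitive :: "int^'n \<Rightarrow> bool" where
  "primitive m \<longleftrightarrow> m \<noteq> 0 \<and> (\<forall>k y. m = k *s y \<longrightarrow> \<bar>k\<bar> = 1)"

end

theory Submission
  imports Defs
begin


definition cadd :: "(('v \<Rightarrow> rat) \<times> rat) \<Rightarrow> (('v \<Rightarrow> rat) \<times> rat) \<Rightarrow> (('v \<Rightarrow> rat) \<times> rat)" where
  "cadd p q = ((\<lambda>v. fst p v + fst q v), snd p + snd q)"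
definition csc :: "rat \<Rightarrow> (('v \<Rightarrow> rat) \<times> rat) \<Rightarrow> (('v \<Rightarrow> rat) \<times> rat)" where
  "csc t p = ((\<lambda>v. t * fst p v), t * snd p)"

inductive_set ccone :: "(('v \<Rightarrow> rat) \<times> rat) set \<Rightarrow> (('v \<Rightarrow> rat) \<times> rat) set" for C where
  cz: "((\<lambda>v. 0), 0) \<in> ccone C"
| cs: "x \<in> ccone C \<Longrightarrow> c \<in> C \<Longrightarrow> t \<ge> 0 \<Longrightarrow> cadd x (csc t c) \<in> ccone C"

definition sat :: "'v set \<Rightarrow> ('v \<Rightarrow> rat) \<Rightarrow> (('v \<Rightarrow> rat) \<times> rat) \<Rightarrow> bool" where
  "sat V x c \<longleftrightarrow> (\<Sum>v\<in>V. fst c v * x v) \<ge> snd c"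

lemma ccone_base: "c \<in> C \<Longrightarrow> c \<in> ccone C"
proof -
  assume "c \<in> C"
  from ccone.cs[OF ccone.cz this, of 1] show ?thesis by (simp add: cadd_def csc_def)
qed

lemma ccone_add: "y \<in> ccone C \<Longrightarrow> x \<in> ccone C \<Longrightarrow> cadd x y \<in> ccone C"
proof (induction y rule: ccone.induct)
  case cz then show ?case by (simp add: cadd_def)
next
  case (cs y c t)
  have "cadd x (cadd y (csc t c)) = cadd (cadd x y) (csc t c)"
    by (simp add: cadd_def algebra_simps)
  then show ?case using cs by (metis ccone.cs)
qed

lemma ccone_scale: "x \<in> ccone C \<Longrightarrow> s \<ge> 0 \<Longrightarrow> csc s x \<in> ccone C"
proof (induction x rule: ccone.induct)
  case cz then show ?case by (simp add: csc_def ccone.cz)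
next
  case (cs y c t)
  have "csc s (cadd y (csc t c)) = cadd (csc s y) (csc (s*t) c)"
    by (simp add: cadd_def csc_def algebra_simps)
  then show ?case using cs by (metis ccone.cs mult_nonneg_nonneg)
qed

lemma ccone_mono: "x \<in> ccone C \<Longrightarrow> C \<subseteq> ccone D \<Longrightarrow> x \<in> ccone D"
proof (induction x rule: ccone.induct)
  case cz then show ?case using ccone.cz by blast
next
  case (cs y c t)
  then show ?case by (meson ccone_add ccone_scale subsetD)
qed

lemma ccone_zero_coord: "x \<in> ccone C \<Longrightarrow> \<forall>c\<in>C. fst c w = 0 \<Longrightarrow> fst x w = 0"
  by (induction x rule: ccone.induct) (auto simp: cadd_def csc_def)

lemma sat_cadd: "sat V x p \<Longrightarrow> sat V x q \<Longrightarrow> sat V x (cadd p q)"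
  by (simp add: sat_def cadd_def algebra_simps sum.distrib)

lemma sat_csc: "sat V x p \<Longrightarrow> t \<ge> 0 \<Longrightarrow> sat V x (csc t p)"
  by (simp add: sat_def csc_def sum_distrib_left[symmetric] mult.assoc mult_left_mono)

lemma farkas:
  assumes "finite V"
  shows "finite C \<Longrightarrow> \<not> (\<exists>x. \<forall>c\<in>C. sat V x c) \<Longrightarrow> \<exists>a b. (a,b) \<in> ccone C \<and> (\<forall>v\<in>V. a v = 0) \<and> b > 0"
  using assms
proof (induction V arbitrary: C rule: finite_induct)
  case empty
  then obtain c where c: "c \<in> C" "snd c > 0" by (force simp: sat_def)
  show ?case using ccone_base[OF c(1)] c(2) by (intro exI[of _ "fst c"] exI[of _ "snd c"]) auto
next
  case (insert w V)
  define C0 where "C0 = {c\<in>C. fst c w = 0}"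
  define Cp where "Cp = {c\<in>C. fst c w > 0}"
  define Cn where "Cn = {c\<in>C. fst c w < 0}"
  define comb where "comb p q = cadd (csc (- fst q w) p) (csc (fst p w) q)" for p q :: "('a \<Rightarrow> rat) \<times> rat"
  define C' where "C' = C0 \<union> (\<lambda>(p,q). comb p q) ` (Cp \<times> Cn)"
  have fin: "finite C'" unfolding C'_def C0_def Cp_def Cn_def using insert.prems by auto
  have C'sub: "C' \<subseteq> ccone C"
  proof
    fix c assume "c \<in> C'"
    then show "c \<in> ccone C"
    proof (cases "c \<in> C0")
      case True then show ?thesis by (simp add: C0_def ccone_base)
    next
      case False
      then obtain p q where pq: "p \<in> Cp" "q \<in> Cn" "c = comb p q" using \<open>c \<in> C'\<close> C'_def by auto
      show ?thesis unfolding pq(3) comb_def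
        using pq(1,2) by (intro ccone_add ccone_scale ccone_base) (auto simp: Cp_def Cn_def)
    qed
  qed
  have C'w: "\<forall>c\<in>C'. fst c w = 0"
    by (auto simp: C'_def C0_def comb_def cadd_def csc_def)
  have "\<not> (\<exists>x. \<forall>c\<in>C'. sat V x c)"
  proof
    assume "\<exists>x. \<forall>c\<in>C'. sat V x c"
    then obtain x where x: "\<forall>c\<in>C'. sat V x c" by blast
    define S where "S c = (\<Sum>v\<in>V. fst c v * x v)" for c :: "('a \<Rightarrow> rat) \<times> rat"
    define L where "L c = (snd c - S c) / fst c w" for c :: "('a \<Rightarrow> rat) \<times> rat"
    have LU: "L p \<le> L q" if "p \<in> Cp" "q \<in> Cn" for p q
    proof -
      have "comb p q \<in> C'" using that by (auto simp: C'_def)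
      then have "sat V x (comb p q)" using x by blast
      moreover have "(\<Sum>v\<in>V. fst (comb p q) v * x v) = (- fst q w) * S p + fst p w * S q"
      proof -
        have "(\<Sum>v\<in>V. fst (comb p q) v * x v) = (\<Sum>v\<in>V. (- fst q w) * (fst p v * x v) + fst p w * (fst q v * x v))"
          by (rule sum.cong) (auto simp: comb_def cadd_def csc_def algebra_simps)
        also have "\<dots> = (- fst q w) * S p + fst p w * S q"
          by (simp only: sum.distrib sum_distrib_left[symmetric] S_def)
        finally show ?thesis .
      qed
      moreover have "snd (comb p q) = (- fst q w) * snd p + fst p w * snd q"
        by (simp add: comb_def cadd_def csc_def)
      ultimately have "(- fst q w) * S p + fst p w * S q \<ge> (- fst q w) * snd p + fst p w * snd q"
        by (simp add: sat_def)
      moreover have "fst p w > 0" "fst q w < 0" using that by (auto simp: Cp_def Cn_def)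
      ultimately have h: "(- fst q w) * (snd p - S p) \<le> fst p w * (S q - snd q)" "fst p w > 0" "- fst q w > 0"
        by (auto simp: algebra_simps)
      have "L q = (S q - snd q) / (- fst q w)" unfolding L_def
        by (simp add: divide_simps)
      then show ?thesis unfolding L_def using h
        by (simp add: divide_simps mult.commute) (simp add: algebra_simps)
    qed
    define t where "t = (if Cp = {} then (if Cn = {} then 0 else Min (L ` Cn)) else Max (L ` Cp))"
    have finCp: "finite Cp" "finite Cn" using insert.prems by (auto simp: Cp_def Cn_def)
    have tp: "L p \<le> t" if "p \<in> Cp" for p
      using that finCp by (auto simp: t_def)
    have tn: "t \<le> L q" if "q \<in> Cn" for q
    proof (cases "Cp = {}")
      case True then show ?thesis using that finCp by (auto simp: t_def)
    next
      case False
      then show ?thesis using that finCp LU by (auto simp: t_def intro!: Max.boundedI)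
    qed
    define x' where "x' = x(w := t)"
    have "\<forall>c\<in>C. sat (insert w V) x' c"
    proof
      fix c assume c: "c \<in> C"
      have eq: "(\<Sum>v\<in>insert w V. fst c v * x' v) = fst c w * t + S c"
        using insert.hyps unfolding S_def x'_def by (auto intro!: sum.cong)
      consider "fst c w = 0" | "fst c w > 0" | "fst c w < 0" by linarith
      then show "sat (insert w V) x' c"
      proof cases
        case 1
        then have "c \<in> C'" using c by (auto simp: C'_def C0_def)
        then show ?thesis using x 1 eq by (simp add: sat_def S_def)
      next
        case 2
        then have "L c \<le> t" using tp c by (auto simp: Cp_def)
        then show ?thesis using 2 eq by (simp add: sat_def L_def pos_divide_le_eq algebra_simps)
      next
        case 3
        then have "t \<le> L c" using tn c by (auto simp: Cn_def)
        then show ?thesis using 3 eq by (simp add: sat_def L_def neg_le_divide_eq algebra_simps)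
      qed
    qed
    then show False using insert.prems by blast
  qed
  from insert.IH[OF fin this] obtain a b where ab: "(a,b) \<in> ccone C'" "\<forall>v\<in>V. a v = 0" "b > 0" by blast
  have "a w = 0" using ccone_zero_coord[OF ab(1) C'w] by simp
  moreover have "(a,b) \<in> ccone C" using ccone_mono[OF ab(1) C'sub] .
  ultimately show ?case using ab by auto
qed

lemma ccone_repr:
  assumes "finite I"
  shows "x \<in> ccone (f ` I) \<Longrightarrow> \<exists>y. (\<forall>i\<in>I. y i \<ge> 0) \<and>
     fst x = (\<lambda>v. \<Sum>i\<in>I. y i * fst (f i) v) \<and> snd x = (\<Sum>i\<in>I. y i * snd (f i))"
proof (induction x rule: ccone.induct)
  case cz then show ?case by (intro exI[of _ "\<lambda>_. 0"]) auto
next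
  case (cs x c t)
  then obtain y where y: "\<forall>i\<in>I. y i \<ge> 0" "fst x = (\<lambda>v. \<Sum>i\<in>I. y i * fst (f i) v)" "snd x = (\<Sum>i\<in>I. y i * snd (f i))" by blast
  obtain i0 where i0: "i0 \<in> I" "c = f i0" using cs by auto
  define y' where "y' i = y i + (if i = i0 then t else 0)" for i
  have d: "(\<Sum>i\<in>I. y' i * F i) = (\<Sum>i\<in>I. y i * F i) + t * F i0" for F :: "_ \<Rightarrow> rat"
  proof -
    have "(\<Sum>i\<in>I. y' i * F i) = (\<Sum>i\<in>I. y i * F i) + (\<Sum>i\<in>I. (if i = i0 then t else 0) * F i)"
      by (simp add: y'_def distrib_right sum.distrib)
    also have "(\<Sum>i\<in>I. (if i = i0 then t else 0) * F i) = (\<Sum>i\<in>I. (if i = i0 then t * F i else 0))"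
      by (rule sum.cong) auto
    also have "\<dots> = t * F i0" using i0 assms by (simp add: sum.delta)
    finally show ?thesis .
  qed
  have "\<forall>i\<in>I. y' i \<ge> 0" using y cs by (auto simp: y'_def)
  moreover have "fst (cadd x (csc t c)) = (\<lambda>v. \<Sum>i\<in>I. y' i * fst (f i) v)"
    using i0 by (simp add: d cadd_def csc_def y(2))
  moreover have "snd (cadd x (csc t c)) = (\<Sum>i\<in>I. y' i * snd (f i))"
    using i0 by (simp add: d[of "\<lambda>i. snd (f i)"] cadd_def csc_def y(3))
  ultimately show ?case by blast
qed



lemma sum_UNIV_sum: "sum g (UNIV::('a::finite+'b::finite) set) = sum (\<lambda>a. g (Inl a)) UNIV + sum (\<lambda>b. g (Inr b)) UNIV"
proof -
  have "sum g (UNIV <+> UNIV) = sum (g \<circ> Inl) (UNIV::'a set) + sum (g \<circ> Inr) (UNIV::'b set)"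
    by (rule sum.Plus) auto
  then show ?thesis by (simp add: UNIV_Plus_UNIV comp_def)
qed

lemma sum_UNIV_unit: "sum g (UNIV::unit set) = g ()"
  by (simp add: UNIV_unit)

lemma swap_lemma: "(\<Sum>j\<in>B. (x j::rat) * (\<Sum>i\<in>A. a i * M i j)) = (\<Sum>i\<in>A. a i * (\<Sum>j\<in>B. M i j * x j))"
proof -
  have "(\<Sum>j\<in>B. x j * (\<Sum>i\<in>A. a i * M i j)) = (\<Sum>j\<in>B. \<Sum>i\<in>A. a i * (M i j * x j))"
    by (simp add: sum_distrib_left ac_simps)
  also have "\<dots> = (\<Sum>i\<in>A. \<Sum>j\<in>B. a i * (M i j * x j))" by (rule sum.swap)
  also have "\<dots> = (\<Sum>i\<in>A. a i * (\<Sum>j\<in>B. M i j * x j))" by (simp add: sum_distrib_left)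
  finally show ?thesis .
qed

lemma lp_dual:
  fixes M :: "'r::finite \<Rightarrow> 'n::finite \<Rightarrow> rat" and E :: "'r \<Rightarrow> rat" and mm :: "'n \<Rightarrow> rat"
  assumes feas: "\<forall>i. (\<Sum>j\<in>UNIV. M i j * x0 j) \<ge> - E i"
    and cone: "\<forall>i. y0 i \<ge> 0" "\<forall>j. (\<Sum>i\<in>UNIV. y0 i * M i j) = mm j"
  shows "\<exists>x y. (\<forall>i. (\<Sum>j\<in>UNIV. M i j * x j) \<ge> - E i) \<and> (\<forall>i. y i \<ge> 0) \<and>
      (\<forall>j. (\<Sum>i\<in>UNIV. y i * M i j) = mm j) \<and> - (\<Sum>i\<in>UNIV. y i * E i) \<ge> (\<Sum>j\<in>UNIV. mm j * x j)"
proof -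
  define f :: "(('r+'r)+(('n+'n)+unit)) \<Rightarrow> (('n+'r) \<Rightarrow> rat) \<times> rat" where
    "f k = (case k of
      Inl (Inl i) \<Rightarrow> (case_sum (\<lambda>j. M i j) (\<lambda>_. 0), - E i)
    | Inl (Inr i) \<Rightarrow> (case_sum (\<lambda>_. 0) (\<lambda>i'. if i' = i then 1 else 0), 0)
    | Inr (Inl (Inl j)) \<Rightarrow> (case_sum (\<lambda>_. 0) (\<lambda>i. M i j), mm j)
    | Inr (Inl (Inr j)) \<Rightarrow> (case_sum (\<lambda>_. 0) (\<lambda>i. - M i j), - mm j)
    | Inr (Inr u) \<Rightarrow> (case_sum (\<lambda>j. - mm j) (\<lambda>i. - E i), 0))" for k
  have fs: "f (Inl (Inl i)) = (case_sum (\<lambda>j. M i j) (\<lambda>_. 0), - E i)"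
    "f (Inl (Inr i)) = (case_sum (\<lambda>_. 0) (\<lambda>i'. if i' = i then 1 else 0), 0)"
    "f (Inr (Inl (Inl j))) = (case_sum (\<lambda>_. 0) (\<lambda>i. M i j), mm j)"
    "f (Inr (Inl (Inr j))) = (case_sum (\<lambda>_. 0) (\<lambda>i. - M i j), - mm j)"
    "f (Inr (Inr u)) = (case_sum (\<lambda>j. - mm j) (\<lambda>i. - E i), 0)" for i j u
    unfolding f_def by simp_all
  have satU: "sat UNIV x c \<longleftrightarrow> (\<Sum>j\<in>UNIV. fst c (Inl j) * x (Inl j)) + (\<Sum>i\<in>UNIV. fst c (Inr i) * x (Inr i)) \<ge> snd c" for x :: "('n+'r) \<Rightarrow> rat" and c
    by (simp add: sat_def sum_UNIV_sum)
  have sumK: "(\<Sum>k\<in>UNIV. h k) = (\<Sum>i\<in>UNIV. h (Inl (Inl i))) + (\<Sum>i\<in>UNIV. h (Inl (Inr i))) +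
      (\<Sum>j\<in>UNIV. h (Inr (Inl (Inl j)))) + (\<Sum>j\<in>UNIV. h (Inr (Inl (Inr j)))) + h (Inr (Inr ()))"
    for h :: "(('r+'r)+(('n+'n)+unit)) \<Rightarrow> rat"
    by (simp add: sum_UNIV_sum sum_UNIV_unit add.assoc)
  have "\<exists>x. \<forall>c\<in>f ` UNIV. sat UNIV x c"
  proof (rule ccontr)
    assume "\<not> ?thesis"
    from farkas[OF finite finite_imageI[OF finite] this] obtain a b where
      ab: "(a,b) \<in> ccone (f ` UNIV)" "\<forall>v. a v = 0" "b > 0" by blast
    from ccone_repr[OF finite ab(1)] obtain y where
      y: "\<forall>k. y k \<ge> 0" "a = (\<lambda>v. \<Sum>k\<in>UNIV. y k * fst (f k) v)" "b = (\<Sum>k\<in>UNIV. y k * snd (f k))" by auto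
    define \<alpha> where "\<alpha> i = y (Inl (Inl i))" for i
    define \<beta> where "\<beta> i = y (Inl (Inr i))" for i
    define g where "g j = y (Inr (Inl (Inl j))) - y (Inr (Inl (Inr j)))" for j
    define \<tau> where "\<tau> = y (Inr (Inr ()))"
    have al: "\<alpha> i \<ge> 0" "\<beta> i \<ge> 0" for i using y(1) by (auto simp: \<alpha>_def \<beta>_def)
    have ta: "\<tau> \<ge> 0" using y(1) by (auto simp: \<tau>_def)
    have eq1: "(\<Sum>i\<in>UNIV. \<alpha> i * M i j) = \<tau> * mm j" for j
    proof -
      have "a (Inl j) = 0" using ab by auto
      then show ?thesis
        by (simp add: y(2) fs sumK \<alpha>_def \<tau>_def)
    qed
    have eq2: "\<beta> i + (\<Sum>j\<in>UNIV. g j * M i j) = \<tau> * E i" for i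
    proof -
      have "a (Inr i) = 0" using ab by auto
      then show ?thesis
        by (simp add: y(2) fs sumK \<beta>_def \<tau>_def g_def
             left_diff_distrib sum_subtractf if_distrib sum_negf cong: if_cong)
    qed
    have eq3: "- (\<Sum>i\<in>UNIV. \<alpha> i * E i) + (\<Sum>j\<in>UNIV. g j * mm j) > 0"
      using ab(3)
      by (simp add: y(3) fs sumK \<alpha>_def g_def
             left_diff_distrib sum_subtractf sum_negf)
    show False
    proof (cases "\<tau> > 0")
      case True
      have "\<tau> * (- (\<Sum>i\<in>UNIV. \<alpha> i * E i) + (\<Sum>j\<in>UNIV. g j * mm j))
          = - (\<Sum>i\<in>UNIV. \<alpha> i * (\<tau> * E i)) + (\<Sum>j\<in>UNIV. g j * (\<tau> * mm j))"
        by (simp add: algebra_simps sum_distrib_left)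
      also have "\<dots> = - (\<Sum>i\<in>UNIV. \<alpha> i * (\<beta> i + (\<Sum>j\<in>UNIV. g j * M i j))) + (\<Sum>j\<in>UNIV. g j * (\<Sum>i\<in>UNIV. \<alpha> i * M i j))"
        by (simp add: eq1[symmetric] eq2[symmetric])
      also have "\<dots> = - (\<Sum>i\<in>UNIV. \<alpha> i * \<beta> i)"
      proof -
        have A: "(\<Sum>i\<in>UNIV. \<alpha> i * (\<beta> i + (\<Sum>j\<in>UNIV. g j * M i j))) = (\<Sum>i\<in>UNIV. \<alpha> i * \<beta> i) + (\<Sum>i\<in>UNIV. \<Sum>j\<in>UNIV. \<alpha> i * (g j * M i j))"
          by (simp add: distrib_left sum.distrib sum_distrib_left)
        have B: "(\<Sum>j\<in>UNIV. g j * (\<Sum>i\<in>UNIV. \<alpha> i * M i j)) = (\<Sum>j\<in>UNIV. \<Sum>i\<in>UNIV. \<alpha> i * (g j * M i j))"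
          by (simp add: sum_distrib_left ac_simps)
        show ?thesis unfolding A B sum.swap[of "\<lambda>i j. \<alpha> i * (g j * M i j)"] by simp
      qed
      also have "\<dots> \<le> 0" using al by (simp add: sum_nonneg)
      finally have "\<tau> * (- (\<Sum>i\<in>UNIV. \<alpha> i * E i) + (\<Sum>j\<in>UNIV. g j * mm j)) \<le> 0" .
      moreover have "\<tau> * (- (\<Sum>i\<in>UNIV. \<alpha> i * E i) + (\<Sum>j\<in>UNIV. g j * mm j)) > 0"
        using True eq3 by (rule mult_pos_pos)
      ultimately show False by linarith
    next
      case False
      then have t0: "\<tau> = 0" using ta by simp
      have "(\<Sum>i\<in>UNIV. \<alpha> i * E i) \<ge> (\<Sum>i\<in>UNIV. \<alpha> i * (- (\<Sum>j\<in>UNIV. M i j * x0 j)))"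
        by (intro sum_mono mult_left_mono) (use feas al in \<open>auto simp: minus_le_iff\<close>)
      also have "(\<Sum>i\<in>UNIV. \<alpha> i * (- (\<Sum>j\<in>UNIV. M i j * x0 j))) = - (\<Sum>j\<in>UNIV. x0 j * (\<Sum>i\<in>UNIV. \<alpha> i * M i j))"
        by (simp add: swap_lemma sum_negf)
      also have "\<dots> = 0" using eq1 t0 by simp
      finally have s1: "(\<Sum>i\<in>UNIV. \<alpha> i * E i) \<ge> 0" .
      have "(\<Sum>j\<in>UNIV. g j * mm j) = (\<Sum>j\<in>UNIV. g j * (\<Sum>i\<in>UNIV. y0 i * M i j))"
        using cone by simp
      also have "\<dots> = (\<Sum>i\<in>UNIV. y0 i * (\<Sum>j\<in>UNIV. M i j * g j))"
        by (rule swap_lemma)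
      also have "\<dots> = (\<Sum>i\<in>UNIV. y0 i * (\<Sum>j\<in>UNIV. g j * M i j))"
        by (simp add: mult.commute)
      also have "\<dots> = (\<Sum>i\<in>UNIV. y0 i * (- \<beta> i))"
      proof -
        have gb: "(\<Sum>j\<in>UNIV. g j * M i j) = - \<beta> i" for i
        proof -
          have "\<beta> i + (\<Sum>j\<in>UNIV. g j * M i j) = 0" using eq2[of i] t0 by simp
          then show ?thesis by linarith
        qed
        show ?thesis by (simp add: gb)
      qed
      also have "\<dots> \<le> 0" using al cone by (simp add: sum_nonpos mult_nonneg_nonpos)
      finally show False using s1 eq3 by linarith
    qed
  qed
  then obtain x where x: "\<forall>k. sat UNIV x (f k)" by blast
  define xv where "xv j = x (Inl j)" for j
  define yv where "yv i = x (Inr i)" for i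
  have "\<forall>i. (\<Sum>j\<in>UNIV. M i j * xv j) \<ge> - E i"
  proof
    fix i show "(\<Sum>j\<in>UNIV. M i j * xv j) \<ge> - E i"
      using x[rule_format, of "Inl (Inl i)"] by (simp add: satU fs xv_def)
  qed
  moreover have "\<forall>i. yv i \<ge> 0"
  proof
    fix i show "yv i \<ge> 0"
    proof -
      have "(\<Sum>i'\<in>UNIV. (if i' = i then 1 else 0) * x (Inr i')) = (\<Sum>i'\<in>UNIV. if i' = i then x (Inr i') else 0)"
        by (rule sum.cong) auto
      then show ?thesis using x[rule_format, of "Inl (Inr i)"] by (simp add: satU fs yv_def)
    qed
  qed
  moreover have "\<forall>j. (\<Sum>i\<in>UNIV. yv i * M i j) = mm j"
  proof
    fix j
    have "(\<Sum>i\<in>UNIV. M i j * yv i) \<ge> mm j"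
      using x[rule_format, of "Inr (Inl (Inl j))"] by (simp add: satU fs yv_def)
    moreover have "- (\<Sum>i\<in>UNIV. M i j * yv i) \<ge> - mm j"
      using x[rule_format, of "Inr (Inl (Inr j))"] by (simp add: satU fs yv_def sum_negf)
    ultimately show "(\<Sum>i\<in>UNIV. yv i * M i j) = mm j" by (simp add: mult.commute)
  qed
  moreover have "- (\<Sum>i\<in>UNIV. yv i * E i) \<ge> (\<Sum>j\<in>UNIV. mm j * xv j)"
    using x[rule_format, of "Inr (Inr ())"]
    by (simp add: satU fs xv_def yv_def sum_negf mult.commute)
  ultimately show ?thesis by blast
qed



definition Irr :: "(int^'r) set \<Rightarrow> (int^'r) set" where
  "Irr S = {x\<in>S. x \<noteq> 0 \<and> (\<forall>a\<in>S. \<forall>b\<in>S. x = a + b \<longrightarrow> a = 0 \<or> b = 0)}"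

definition good :: "(int^'r::finite) set \<Rightarrow> bool" where
  "good S \<longleftrightarrow> 0 \<in> S \<and> (\<forall>a\<in>S. \<forall>b\<in>S. a + b \<in> S) \<and> (\<forall>x\<in>S. \<forall>i. x$i \<ge> 0)"

lemma good_mult: "good S \<Longrightarrow> h \<in> S \<Longrightarrow> int n *s h \<in> S"
proof (induction n)
  case 0 then show ?case by (simp add: good_def)
next
  case (Suc n)
  have "int (Suc n) *s h = h + int n *s h" by (simp add: vector_sadd_rdistrib)
  then show ?case using Suc by (simp add: good_def)
qed

lemma good_sum: assumes "good S" shows "finite F \<Longrightarrow> (\<forall>h\<in>F. g h \<in> S) \<Longrightarrow> sum g F \<in> S"
  by (induction F rule: finite_induct) (use assms in \<open>auto simp: good_def\<close>)

lemma span_sub: "good S \<Longrightarrow> H \<subseteq> S \<Longrightarrow> monoid_span H \<subseteq> S"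
  unfolding monoid_span_def using good_sum good_mult by (smt (verit, ccfv_threshold) mem_Collect_eq subset_iff)

lemma span_zero: "0 \<in> monoid_span H"
  unfolding monoid_span_def by (auto intro!: exI[of _ "{}"])

lemma span_single: "h \<in> H \<Longrightarrow> h \<in> monoid_span H"
  unfolding monoid_span_def by (auto intro!: exI[of _ "{h}"] exI[of _ "\<lambda>_. 1"])

lemma sum_extend:
  assumes "finite F" "F1 \<subseteq> F"
  shows "(\<Sum>h\<in>F. int (if h \<in> F1 then c h else 0) *s (h::int^'r)) = (\<Sum>h\<in>F1. int (c h) *s h)"
proof -
  have "(\<Sum>h\<in>F. int (if h \<in> F1 then c h else 0) *s h) = (\<Sum>h\<in>F1. int (if h \<in> F1 then c h else 0) *s h)"
    using assms by (intro sum.mono_neutral_right) auto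
  also have "\<dots> = (\<Sum>h\<in>F1. int (c h) *s h)" by (rule sum.cong) auto
  finally show ?thesis .
qed

lemma span_add: "x \<in> monoid_span H \<Longrightarrow> y \<in> monoid_span H \<Longrightarrow> x + y \<in> monoid_span H"
proof -
  assume "x \<in> monoid_span H" "y \<in> monoid_span H"
  then obtain F1 c1 F2 c2 where f: "finite F1" "F1 \<subseteq> H" "x = (\<Sum>h\<in>F1. int (c1 h) *s h)"
    "finite F2" "F2 \<subseteq> H" "y = (\<Sum>h\<in>F2. int (c2 h) *s h)" unfolding monoid_span_def by blast
  define c where "c h = (if h \<in> F1 then c1 h else 0) + (if h \<in> F2 then c2 h else 0)" for h
  have "(\<Sum>h\<in>F1 \<union> F2. int (c h) *s h) = (\<Sum>h\<in>F1 \<union> F2. int (if h \<in> F1 then c1 h else 0) *s h) + (\<Sum>h\<in>F1 \<union> F2. int (if h \<in> F2 then c2 h else 0) *s h)"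
    unfolding c_def by (simp only: of_nat_add vector_sadd_rdistrib sum.distrib)
  also have "\<dots> = x + y"
  proof -
    have "(\<Sum>h\<in>F1 \<union> F2. int (if h \<in> F1 then c1 h else 0) *s h) = x"
      unfolding f(3) by (rule sum_extend) (use f in auto)
    moreover have "(\<Sum>h\<in>F1 \<union> F2. int (if h \<in> F2 then c2 h else 0) *s h) = y"
      unfolding f(6) by (rule sum_extend) (use f in auto)
    ultimately show ?thesis by simp
  qed
  finally show ?thesis unfolding monoid_span_def using f by (intro CollectI exI[of _ "F1 \<union> F2"] exI[of _ c]) auto
qed

definition sz :: "int^'r::finite \<Rightarrow> nat" where "sz x = (\<Sum>i\<in>UNIV. nat (x$i))"

lemma sz_add: "\<forall>i. a$i \<ge> 0 \<Longrightarrow> \<forall>i. b$i \<ge> 0 \<Longrightarrow> sz (a + b) = sz a + sz b"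
  unfolding sz_def by (simp add: nat_add_distrib sum.distrib)

lemma sz_pos: "\<forall>i. a$i \<ge> 0 \<Longrightarrow> a \<noteq> 0 \<Longrightarrow> sz a > 0"
proof -
  assume "\<forall>i. a$i \<ge> 0" "a \<noteq> 0"
  then obtain i where "a$i > 0" by (metis order_le_less vec_eq_iff zero_index)
  then have "nat (a$i) > 0" by simp
  then show ?thesis unfolding sz_def by (metis finite UNIV_I sum_pos2 zero_le)
qed

lemma irr_gen: assumes "good S" shows "x \<in> S \<Longrightarrow> x \<in> monoid_span (Irr S)"
proof (induction "sz x" arbitrary: x rule: less_induct)
  case less
  show ?case
  proof (cases "x \<in> Irr S \<or> x = 0")
    case True then show ?thesis using span_zero span_single by blast
  next
    case False
    then obtain a b where ab: "a \<in> S" "b \<in> S" "x = a + b" "a \<noteq> 0" "b \<noteq> 0"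
      using less.prems by (auto simp: Irr_def)
    have nn: "\<forall>i. a$i \<ge> 0" "\<forall>i. b$i \<ge> 0" using ab assms by (auto simp: good_def)
    have "sz x = sz a + sz b" using sz_add[OF nn] ab by simp
    moreover have "sz a > 0" "sz b > 0" using sz_pos nn ab by auto
    ultimately have "sz a < sz x" "sz b < sz x" by auto
    then show ?thesis using less.hyps ab span_add by metis
  qed
qed

lemma irr_sub: assumes "good S" "H \<subseteq> S" "monoid_span H = S" shows "Irr S \<subseteq> H"
proof
  fix x assume x: "x \<in> Irr S"
  then have "x \<in> monoid_span H" using assms by (simp add: Irr_def)
  then obtain F c where f: "finite F" "F \<subseteq> H" "x = (\<Sum>h\<in>F. int (c h) *s h)" unfolding monoid_span_def by blast
  have "\<exists>h0\<in>F. c h0 > 0 \<and> h0 \<noteq> 0"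
  proof (rule ccontr)
    assume "\<not> ?thesis"
    then have "\<forall>h\<in>F. int (c h) *s h = 0" by auto
    then have "x = 0" using f by (simp add: sum.neutral)
    then show False using x by (simp add: Irr_def)
  qed
  then obtain h0 where h0: "h0 \<in> F" "c h0 > 0" "h0 \<noteq> 0" by blast
  define r where "r = int (c h0 - 1) *s h0 + (\<Sum>h\<in>F - {h0}. int (c h) *s h)"
  have "x = int (c h0) *s h0 + (\<Sum>h\<in>F - {h0}. int (c h) *s h)"
    using f h0 by (simp add: sum.remove)
  also have "int (c h0) = 1 + int (c h0 - 1)" using h0 by simp
  finally have xr: "x = h0 + r" unfolding r_def by (simp add: vector_sadd_rdistrib add.assoc)
  have HS: "\<forall>h\<in>F. h \<in> S" using f assms by auto
  have "r \<in> S" unfolding r_def using assms(1) HS h0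
    by (metis (no_types, lifting) DiffD1 good_def good_mult good_sum f(1) finite_Diff)
  moreover have "h0 \<in> S" using HS h0 by auto
  ultimately have "r = 0" using x xr h0 by (auto simp: Irr_def)
  then show "x \<in> H" using xr h0 f by auto
qed

lemma hb_char:
  assumes "good (lattice_points C)"
  shows "hilbert_basis C = Irr (lattice_points C)"
  unfolding hilbert_basis_def
proof (rule the_equality)
  let ?S = "lattice_points C"
  have "Irr ?S \<subseteq> ?S" by (auto simp: Irr_def)
  then have "monoid_span (Irr ?S) = ?S"
    using irr_gen[OF assms] span_sub[OF assms] by auto
  moreover have "\<forall>H'. H' \<subset> Irr ?S \<longrightarrow> monoid_span H' \<noteq> ?S"
  proof (intro allI impI notI)
    fix H' assume H': "H' \<subset> Irr ?S" "monoid_span H' = ?S"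
    have "H' \<subseteq> ?S" using H' by (auto simp: Irr_def)
    then have "Irr ?S \<subseteq> H'" using irr_sub[OF assms _ H'(2)] by blast
    then show False using H'(1) by blast
  qed
  ultimately show "Irr ?S \<subseteq> ?S \<and> monoid_span (Irr ?S) = ?S \<and> (\<forall>H'. H' \<subset> Irr ?S \<longrightarrow> monoid_span H' \<noteq> ?S)"
    by (auto simp: Irr_def)
next
  let ?S = "lattice_points C"
  fix H assume H: "H \<subseteq> ?S \<and> monoid_span H = ?S \<and> (\<forall>H'. H' \<subset> H \<longrightarrow> monoid_span H' \<noteq> ?S)"
  have 1: "Irr ?S \<subseteq> H" using irr_sub[OF assms] H by blast
  have "Irr ?S \<subseteq> ?S" by (auto simp: Irr_def)
  then have "monoid_span (Irr ?S) = ?S"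
    using irr_gen[OF assms] span_sub[OF assms] by auto
  then show "H = Irr ?S" using H 1 by blast
qed



lemma rvec_nth [simp]: "rvec x $ i = of_int (x $ i)"
  by (simp add: rvec_def)

lemma pmap_nth: "pmap ms s $ j = (\<Sum>i\<in>UNIV. s$i * of_int (ms i $ j))"
  by (simp add: pmap_def)

lemma weak:
  fixes M :: "'r::finite \<Rightarrow> 'n::finite \<Rightarrow> rat"
  assumes "\<forall>i. s i \<ge> 0" "\<forall>i. (\<Sum>j\<in>UNIV. M i j * x j) \<ge> - E i" "\<forall>j. (\<Sum>i\<in>UNIV. s i * M i j) = q * mm j"
  shows "(\<Sum>i\<in>UNIV. s i * E i) \<ge> - q * (\<Sum>j\<in>UNIV. mm j * x j)"
proof -
  have "(\<Sum>i\<in>UNIV. s i * E i) \<ge> (\<Sum>i\<in>UNIV. s i * (- (\<Sum>j\<in>UNIV. M i j * x j)))"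
    by (intro sum_mono mult_left_mono) (use assms in \<open>auto simp: minus_le_iff\<close>)
  also have "(\<Sum>i\<in>UNIV. s i * (- (\<Sum>j\<in>UNIV. M i j * x j))) = - (\<Sum>j\<in>UNIV. x j * (\<Sum>i\<in>UNIV. s i * M i j))"
    by (simp add: swap_lemma sum_negf)
  also have "\<dots> = - q * (\<Sum>j\<in>UNIV. mm j * x j)"
    using assms(3) by (simp add: sum_distrib_left sum_negf mult.commute mult.left_commute)
  finally show ?thesis .
qed

lemma swap_helper: "(\<Sum>i\<in>A. (\<Sum>h\<in>F. (a h::rat) * b h i) * w i) = (\<Sum>h\<in>F. a h * (\<Sum>i\<in>A. b h i * w i))"
proof -
  have "(\<Sum>i\<in>A. (\<Sum>h\<in>F. a h * b h i) * w i) = (\<Sum>i\<in>A. \<Sum>h\<in>F. a h * (b h i * w i))"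
    by (simp add: sum_distrib_right mult.assoc)
  also have "\<dots> = (\<Sum>h\<in>F. \<Sum>i\<in>A. a h * (b h i * w i))" by (rule sum.swap)
  also have "\<dots> = (\<Sum>h\<in>F. a h * (\<Sum>i\<in>A. b h i * w i))" by (simp add: sum_distrib_left)
  finally show ?thesis .
qed

lemma common_denom:
  fixes y :: "'a \<Rightarrow> rat"
  shows "finite A \<Longrightarrow> \<exists>N::int. N > 0 \<and> (\<forall>i\<in>A. \<exists>z::int. of_int N * y i = of_int z)"
proof (induction A rule: finite_induct)
  case empty then show ?case by (intro exI[of _ 1]) auto
next
  case (insert a A)
  then obtain N where N: "N > 0" "\<forall>i\<in>A. \<exists>z::int. of_int N * y i = of_int z" by blast
  obtain p b where pb: "quotient_of (y a) = (p, b)" by (cases "quotient_of (y a)")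
  have b: "b > 0" "y a = of_int p / of_int b" using quotient_of_denom_pos[OF pb] quotient_of_div[OF pb] by auto
  have "\<forall>i\<in>insert a A. \<exists>z::int. of_int (N * b) * y i = of_int z"
  proof
    fix i assume "i \<in> insert a A"
    then show "\<exists>z::int. of_int (N * b) * y i = of_int z"
    proof
      assume "i = a"
      then show ?thesis using b by (intro exI[of _ "N * p"]) auto
    next
      assume "i \<in> A"
      then obtain z where "of_int N * y i = (of_int z :: rat)" using N by blast
      then show ?thesis by (intro exI[of _ "b * z"]) (simp add: mult.commute mult.left_commute)
    qed
  qed
  then show ?case using N b by (intro exI[of _ "N * b"]) auto
qed

lemma m_nz: "m \<noteq> (0::int^'n::finite) \<Longrightarrow> \<exists>j. m $ j \<noteq> 0"
  by (metis vec_eq_iff zero_index)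

lemma scale_inj:
  assumes "m \<noteq> 0" "(q::rat) *s rvec m = q' *s rvec m" shows "q = q'"
proof -
  obtain j where "m $ j \<noteq> 0" using m_nz[OF assms(1)] by blast
  moreover have "q * of_int (m$j) = q' * of_int (m$j)" using assms(2) by (metis rvec_nth vector_smult_component)
  ultimately show ?thesis by simp
qed

lemma lam_ok:
  assumes prim: "primitive m" and h: "pmap ms (rvec h) = q *s rvec m" and q: "q > 0"
  shows "\<exists>k::int. k > 0 \<and> q = of_int k \<and> lam ms m h = k"
proof -
  obtain a b where ab: "quotient_of q = (a, b)" by (cases "quotient_of q")
  have b: "b > 0" "q = of_int a / of_int b" "coprime a b"
    using quotient_of_denom_pos[OF ab] quotient_of_div[OF ab] quotient_of_coprime[OF ab] by auto
  define z where "z j = (\<Sum>i\<in>UNIV. h$i * ms i $ j)" for j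
  have zj: "b * z j = a * m $ j" for j
  proof -
    have "of_int (z j) = q * of_int (m $ j)"
      using h[THEN arg_cong[where f="\<lambda>v. v $ j"]] by (simp add: pmap_nth z_def)
    then have "of_int b * of_int (z j) = of_int a * (of_int (m $ j) :: rat)" using b by (simp add: field_simps)
    then show ?thesis by (metis of_int_eq_iff of_int_mult)
  qed
  have "b dvd m $ j" for j
  proof -
    have "b dvd a * m $ j" using zj[of j] by (metis dvd_triv_left)
    then show ?thesis using b(3) by (simp add: coprime_dvd_mult_right_iff coprime_commute)
  qed
  then have "m = b *s (\<chi> j. m $ j div b)" by (simp add: vec_eq_iff)
  then have "\<bar>b\<bar> = 1" using prim unfolding primitive_def by blast
  then have b1: "b = 1" using b by simp
  then have qa: "q = of_int a" using b by simp
  then have a0: "a > 0" using q by simp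
  have "lam ms m h = a"
    unfolding lam_def
  proof (rule the_equality)
    show "0 < a \<and> pmap ms (rvec h) = of_int a *s rvec m" using a0 h qa by simp
  next
    fix k assume "0 < k \<and> pmap ms (rvec h) = of_int k *s rvec m"
    then have "pmap ms (rvec h) = of_int k *s rvec m" by blast
    then have "q *s rvec m = of_int k *s rvec m" using h by simp
    then have "q = of_int k" using scale_inj prim unfolding primitive_def by blast
    then show "k = a" using qa by simp
  qed
  then show ?thesis using a0 qa by blast
qed

lemma S_iff: "x \<in> lattice_points (fiber_cone ms m) \<longleftrightarrow>
   (\<forall>i. x$i \<ge> 0) \<and> (\<exists>q\<ge>0. pmap ms (rvec x) = q *s rvec m)"
  by (auto simp: lattice_points_def fiber_cone_def ray_def)

lemma pmap_add: "pmap ms (rvec (a + b)) = pmap ms (rvec a) + pmap ms (rvec b)"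
  by (simp add: vec_eq_iff pmap_nth distrib_right sum.distrib)

lemma S_good: "good (lattice_points (fiber_cone ms m))"
proof -
  let ?S = "lattice_points (fiber_cone ms m)"
  have "0 \<in> ?S" unfolding S_iff by (auto simp: vec_eq_iff pmap_nth intro!: exI[of _ 0])
  moreover have "a + b \<in> ?S" if a: "a \<in> ?S" and b: "b \<in> ?S" for a b
  proof -
    obtain qa qb where q: "qa \<ge> 0" "pmap ms (rvec a) = qa *s rvec m" "qb \<ge> 0" "pmap ms (rvec b) = qb *s rvec m"
      using a b unfolding S_iff by auto
    have "pmap ms (rvec (a+b)) = (qa + qb) *s rvec m" using q by (simp add: pmap_add vector_sadd_rdistrib)
    then show ?thesis using a b q unfolding S_iff by (auto intro!: exI[of _ "qa+qb"])
  qed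
  moreover have "\<forall>x\<in>?S. \<forall>i. x$i \<ge> 0" using S_iff by blast
  ultimately show ?thesis unfolding good_def by blast
qed



theorem lemma4p4p11:
  fixes ms :: "'r::finite \<Rightarrow> int^'n::finite" and e :: "'r \<Rightarrow> int" and m :: "int^'n"
  assumes nonzero: "\<forall>i. ms i \<noteq> 0"
    and generates: "\<forall>x::int^'n. \<exists>c::'r \<Rightarrow> int. x = (\<Sum>i\<in>UNIV. c i *s ms i)"
    and prim: "primitive m"
    and in_cone: "ray m \<subseteq> cone_gen ms"
    and nonempty: "Delta ms e \<noteq> {}"
  shows "\<exists>c::rat.
      (\<exists>s\<in>H_star ms m. of_int (\<Sum>i\<in>UNIV. s $ i * e i) / of_int (lam ms m s) = c) \<and>
      (\<forall>s\<in>H_star ms m. of_int (\<Sum>i\<in>UNIV. s $ i * e i) / of_int (lam ms m s) \<ge> c) \<and>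
      (\<exists>v\<in>Delta ms e. pairing m v = - c) \<and>
      (\<forall>v\<in>Delta ms e. pairing m v \<ge> - c)"
proof -
  define M where "M i j = (of_int (ms i $ j) :: rat)" for i j
  define E where "E i = (of_int (e i) :: rat)" for i
  define mm where "mm j = (of_int (m $ j) :: rat)" for j
  have DeltaI: "v \<in> Delta ms e \<longleftrightarrow> (\<forall>i. (\<Sum>j\<in>UNIV. M i j * v $ j) \<ge> - E i)" for v
    by (simp add: Delta_def pairing_def M_def E_def)
  have pm: "pairing m v = (\<Sum>j\<in>UNIV. mm j * v $ j)" for v by (simp add: pairing_def mm_def)
  have pmapc: "pmap ms (rvec h) $ j = (\<Sum>i\<in>UNIV. of_int (h $ i) * M i j)" for h j
    by (simp add: pmap_nth M_def)
  obtain v0 where v0: "v0 \<in> Delta ms e" using nonempty by auto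
  have feas: "\<forall>i. (\<Sum>j\<in>UNIV. M i j * v0 $ j) \<ge> - E i" using v0 DeltaI by blast
  have "rvec m \<in> ray m" unfolding ray_def by (auto intro!: exI[of _ 1])
  then obtain a where a: "\<forall>i. a i \<ge> 0" "rvec m = (\<Sum>i\<in>UNIV. a i *s rvec (ms i))"
    using in_cone unfolding cone_gen_def by auto
  have y0: "\<forall>j. (\<Sum>i\<in>UNIV. a i * M i j) = mm j"
  proof
    fix j show "(\<Sum>i\<in>UNIV. a i * M i j) = mm j"
      using a(2)[THEN arg_cong[where f="\<lambda>v. v $ j"]] by (simp add: M_def mm_def)
  qed
  obtain xv yv where L: "\<forall>i. (\<Sum>j\<in>UNIV. M i j * xv j) \<ge> - E i" "\<forall>i. yv i \<ge> 0"
      "\<forall>j. (\<Sum>i\<in>UNIV. yv i * M i j) = mm j" "- (\<Sum>i\<in>UNIV. yv i * E i) \<ge> (\<Sum>j\<in>UNIV. mm j * xv j)"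
    using lp_dual[OF feas a(1) y0] by blast
  define vs where "vs = (\<chi> j. xv j)"
  define c where "c = - pairing m vs"
  have vsD: "vs \<in> Delta ms e" using L(1) DeltaI by (simp add: vs_def)
  have yE: "(\<Sum>i\<in>UNIV. yv i * E i) \<le> c" using L(4) by (simp add: c_def pm vs_def)
  have lowD: "\<forall>v\<in>Delta ms e. pairing m v \<ge> - c"
  proof
    fix v assume v: "v \<in> Delta ms e"
    then have "\<forall>i. (\<Sum>j\<in>UNIV. M i j * v $ j) \<ge> - E i" using DeltaI by blast
    from weak[OF L(2) this, of 1 mm] L(3) have "(\<Sum>i\<in>UNIV. yv i * E i) \<ge> - pairing m v" by (simp add: pm)
    then show "pairing m v \<ge> - c" using yE by linarith
  qed
  let ?S = "lattice_points (fiber_cone ms m)"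
  have hb: "hilbert_basis (fiber_cone ms m) = Irr ?S" by (rule hb_char[OF S_good])
  have m0: "m \<noteq> 0" using prim by (simp add: primitive_def)
  have wk: "(\<Sum>i\<in>UNIV. of_int (h $ i) * E i) \<ge> q * c" if h: "h \<in> ?S" "pmap ms (rvec h) = q *s rvec m" for h q
  proof -
    have "\<forall>i. of_int (h $ i) \<ge> (0::rat)" using h(1) S_iff by auto
    moreover have "\<forall>j. (\<Sum>i\<in>UNIV. of_int (h $ i) * M i j) = q * mm j"
    proof
      fix j show "(\<Sum>i\<in>UNIV. of_int (h $ i) * M i j) = q * mm j"
        using h(2)[THEN arg_cong[where f="\<lambda>v. v $ j"]] by (simp add: pmapc mm_def)
    qed
    ultimately have "(\<Sum>i\<in>UNIV. of_int (h $ i) * E i) \<ge> - q * (\<Sum>j\<in>UNIV. mm j * xv j)"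
      using weak[where s="\<lambda>i. of_int (h $ i)" and q=q and mm=mm, OF _ L(1)] by blast
    then show ?thesis by (simp add: c_def pm vs_def)
  qed
  have lowH: "\<forall>s\<in>H_star ms m. of_int (\<Sum>i\<in>UNIV. s $ i * e i) / of_int (lam ms m s) \<ge> c"
  proof
    fix s assume s: "s \<in> H_star ms m"
    then have sS: "s \<in> ?S" and nz: "pmap ms (rvec s) \<noteq> 0" by (auto simp: H_star_def hb Irr_def)
    obtain q where q: "q \<ge> 0" "pmap ms (rvec s) = q *s rvec m" using sS unfolding S_iff by blast
    have "q > 0" using q nz by (cases "q = 0") auto
    then obtain k where k: "k > 0" "q = of_int k" "lam ms m s = k" using lam_ok[OF prim q(2)] by blast
    have "(\<Sum>i\<in>UNIV. of_int (s $ i) * E i) \<ge> q * c" using wk[OF sS q(2)] .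
    then show "of_int (\<Sum>i\<in>UNIV. s $ i * e i) / of_int (lam ms m s) \<ge> c"
      using k by (simp add: E_def pos_le_divide_eq mult.commute)
  qed
  obtain N where N: "N > 0" "\<forall>i\<in>UNIV. \<exists>z::int. of_int N * yv i = of_int z"
    using common_denom[of UNIV yv] by auto
  then obtain z where z: "\<forall>i. of_int N * yv i = (of_int (z i) :: rat)"
    using bchoice[OF N(2)] by auto
  define s0 where "s0 = (\<chi> i. z i)"
  have ps0: "pmap ms (rvec s0) = of_int N *s rvec m"
  proof -
    have "pmap ms (rvec s0) $ j = (of_int N *s rvec m) $ j" for j
    proof -
      have "pmap ms (rvec s0) $ j = (\<Sum>i\<in>UNIV. of_int N * (yv i * M i j))"
        by (simp add: pmapc s0_def z[rule_format, symmetric] mult.assoc)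
      also have "\<dots> = of_int N * mm j" using L(3) by (simp add: sum_distrib_left[symmetric])
      finally show ?thesis by (simp add: mm_def)
    qed
    then show ?thesis by (simp add: vec_eq_iff)
  qed
  have s0S: "s0 \<in> ?S"
  proof -
    have "z i \<ge> 0" for i
    proof -
      have "(of_int (z i) :: rat) \<ge> 0" using z L(2) N(1) by (metis mult_nonneg_nonneg of_int_0_le_iff order_less_imp_le)
      then show ?thesis by simp
    qed
    then show ?thesis unfolding S_iff using ps0 N(1) by (auto simp: s0_def intro!: exI[of _ "of_int N"])
  qed
  from irr_gen[OF S_good s0S] obtain F cc where
    F: "finite F" "F \<subseteq> Irr ?S" "s0 = (\<Sum>h\<in>F. int (cc h) *s h)" unfolding monoid_span_def by blast
  have FS: "\<forall>h\<in>F. h \<in> ?S" using F(2) by (auto simp: Irr_def)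
  then have "\<forall>h\<in>F. \<exists>q\<ge>0. pmap ms (rvec h) = q *s rvec m" using S_iff by blast
  then obtain qh where qh: "\<forall>h\<in>F. qh h \<ge> 0 \<and> pmap ms (rvec h) = qh h *s rvec m" by metis
  define Ev where "Ev h = (\<Sum>i\<in>UNIV. of_int (h $ i) * E i)" for h :: "int^'r"
  have s0c: "(of_int (s0 $ i) :: rat) = (\<Sum>h\<in>F. of_int (cc h) * of_int (h $ i))" for i
    using F(3) by simp
  have Ev0: "Ev s0 = (\<Sum>h\<in>F. of_int (cc h) * Ev h)"
    unfolding Ev_def s0c by (rule swap_helper)
  have Ev0': "Ev s0 = of_int N * (\<Sum>i\<in>UNIV. yv i * E i)"
    unfolding Ev_def by (simp add: s0_def z[rule_format, symmetric] sum_distrib_left mult.assoc)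
  obtain j0 where j0: "m $ j0 \<noteq> 0" using m_nz[OF m0] by blast
  have Nq: "of_int N = (\<Sum>h\<in>F. of_int (cc h) * qh h)"
  proof -
    have "of_int N * mm j0 = pmap ms (rvec s0) $ j0" using ps0 by (simp add: mm_def)
    also have "\<dots> = (\<Sum>h\<in>F. of_int (cc h) * pmap ms (rvec h) $ j0)"
      unfolding pmapc s0c by (rule swap_helper)
    also have "\<dots> = (\<Sum>h\<in>F. of_int (cc h) * qh h) * mm j0"
      using qh by (simp add: sum_distrib_right mm_def mult.assoc)
    finally show ?thesis using j0 by (simp add: mm_def)
  qed
  have tnn: "\<forall>h\<in>F. of_int (cc h) * (Ev h - qh h * c) \<ge> 0"
    using wk FS qh by (auto simp: Ev_def)
  have "(\<Sum>h\<in>F. of_int (cc h) * (Ev h - qh h * c)) = Ev s0 - of_int N * c"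
    by (simp add: Ev0 Nq right_diff_distrib sum_subtractf sum_distrib_right mult.assoc)
  also have "\<dots> \<le> 0" using Ev0' yE N(1) by (simp add: mult_left_mono)
  finally have le0: "(\<Sum>h\<in>F. of_int (cc h) * (Ev h - qh h * c)) \<le> 0" .
  have "(\<Sum>h\<in>F. of_int (cc h) * (Ev h - qh h * c)) \<ge> 0" using tnn by (simp add: sum_nonneg)
  with le0 have "(\<Sum>h\<in>F. of_int (cc h) * (Ev h - qh h * c)) = 0" by linarith
  then have t0: "\<forall>h\<in>F. of_int (cc h) * (Ev h - qh h * c) = 0"
    using tnn by (subst (asm) sum_nonneg_eq_0_iff[OF F(1)]) auto
  have "\<exists>h\<in>F. of_int (cc h) * qh h > 0"
  proof (rule ccontr)
    assume "\<not> ?thesis"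
    then have "(\<Sum>h\<in>F. of_int (cc h) * qh h) \<le> 0" by (meson not_less sum_nonpos)
    then show False using Nq N(1) by simp
  qed
  then obtain h where h: "h \<in> F" "of_int (cc h) * qh h > 0" by blast
  have hq: "qh h > 0" "of_int (cc h) \<noteq> (0::rat)" using h qh by (auto simp: zero_less_mult_iff)
  then have Evh: "Ev h = qh h * c" using t0 h(1) by auto
  have ph: "pmap ms (rvec h) = qh h *s rvec m" using qh h(1) by blast
  obtain k where k: "k > 0" "qh h = of_int k" "lam ms m h = k" using lam_ok[OF prim ph hq(1)] by blast
  have hH: "h \<in> H_star ms m"
  proof -
    have "pmap ms (rvec h) \<noteq> 0"
    proof
      assume "pmap ms (rvec h) = 0"
      then have "qh h *s rvec m = 0 *s rvec m" using ph by simp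
      then have "qh h = 0" by (rule scale_inj[OF m0])
      then show False using hq by simp
    qed
    then show ?thesis using h(1) F(2) by (auto simp: H_star_def hb)
  qed
  have "of_int (\<Sum>i\<in>UNIV. h $ i * e i) / of_int (lam ms m h) = c"
    using Evh k by (simp add: Ev_def E_def)
  then show ?thesis using hH lowH vsD lowD by (intro exI[of _ c]) (auto simp: c_def)
qed


end
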